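(* Let $1\leq n\leq N$, let $\mathcal{G}$ be a class of classifiers $g:\mathcal{X}\to\{-1,+1\}$ of finite VC dimension $V$, and let $\boldsymbol{\epsilon}_N$ be the indicator vector of a rejective sampling design of size $n$ with first-order inclusion probabilities $\boldsymbol{\pi}_N=(\pi_1,\ldots,\pi_N)$ (all $\pi_i>0$), independent of $\mathcal{D}_N$. Set $\kappa_N=(n/N)/\min_{i\leq N}\pi_i$. Then for every $\delta\in(0,1)$, with probability at least $1-\delta$, $$\sup_{g\in\mathcal{G}}\big|\bar{L}_{\boldsymbol{\epsilon}_N}(g)-\widehat{L}_N(g)\big|\leq 2\kappa_N\frac{\log(2/\delta)+V\log(N+1)}{3n}+\sqrt{2\kappa_N\frac{\log(2/\delta)+V\log(N+1)}{n}}.$$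
   Context: $(X,Y)$ is a random pair with values in $\mathcal{X}\times\{-1,+1\}$ and $\mathcal{D}_N=\{(X_i,Y_i):1\leq i\leq N\}$ consists of $N$ i.i.d. copies of $(X,Y)$. A rejective sampling design of size $n$ on $\{1,\ldots,N\}$ with canonical parameters $\mathbf{p}_N\in(0,1)^N$, $\sum_i p_i=n$, draws a random subset $S$ with $\mathbb{P}(S=s)=C\prod_{i\in s}p_i\prod_{i\notin s}(1-p_i)$ if $\#s=n$ and $0$ otherwise ($C$ a normalizing constant); $\epsilon_i=\mathbb{I}\{i\in S\}$ and $\pi_i=\mathbb{P}(i\in S)$. The empirical risk is $\widehat{L}_N(g)=\frac1N\sum_{i=1}^N\mathbb{I}\{g(X_i)\neq Y_i\}$ and the Horvitz–Thompson (HT) empirical risk is $\bar{L}_{\boldsymbol{\epsilon}_N}(g)=\frac1N\sum_{i=1}^N\frac{\epsilon_i}{\pi_i}\mathbb{I}\{g(X_i)\neq Y_i\}$. *)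

theory Defs
  imports "HOL-Analysis.Analysis"
begin

text \<open>Rejective sampling design of size n with
canonical parameters p: P(S = s) = C * prod_{i in s} p i * prod_{i notin s} (1 - p i)
for s a subset of {1..N} with card s = n, and 0 otherwise.\<close>

definition samples :: "nat \<Rightarrow> nat \<Rightarrow> nat set set" where
  "samples N n = {s. s \<subseteq> {1..N} \<and> card s = n}"

definition rej_weight :: "(nat \<Rightarrow> real) \<Rightarrow> nat \<Rightarrow> nat set \<Rightarrow> real" where
  "rej_weight p N s = (\<Prod>i\<in>s. p i) * (\<Prod>i\<in>{1..N} - s. 1 - p i)"

definition rej_prob :: "(nat \<Rightarrow> real) \<Rightarrow> nat \<Rightarrow> nat \<Rightarrow> (nat set \<Rightarrow> bool) \<Rightarrow> real" where
  "rej_prob p N n A =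
     (\<Sum>s\<in>{s\<in>samples N n. A s}. rej_weight p N s) / (\<Sum>s\<in>samples N n. rej_weight p N s)"

definition incl_prob :: "(nat \<Rightarrow> real) \<Rightarrow> nat \<Rightarrow> nat \<Rightarrow> nat \<Rightarrow> real" where
  "incl_prob p N n i = rej_prob p N n (\<lambda>s. i \<in> s)"

definition emp_risk :: "nat \<Rightarrow> (nat \<Rightarrow> 'a) \<Rightarrow> (nat \<Rightarrow> int) \<Rightarrow> ('a \<Rightarrow> int) \<Rightarrow> real" where
  "emp_risk N x y g = (1 / real N) * (\<Sum>i=1..N. if g (x i) \<noteq> y i then 1 else 0)"

definition HT_risk :: "(nat \<Rightarrow> real) \<Rightarrow> nat \<Rightarrow> nat \<Rightarrow> (nat \<Rightarrow> 'a) \<Rightarrow> (nat \<Rightarrow> int)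
    \<Rightarrow> nat set \<Rightarrow> ('a \<Rightarrow> int) \<Rightarrow> real" where
  "HT_risk p N n x y s g = (1 / real N) *
     (\<Sum>i=1..N. (if i \<in> s then 1 else 0) / incl_prob p N n i * (if g (x i) \<noteq> y i then 1 else 0))"

definition shatters :: "('a \<Rightarrow> int) set \<Rightarrow> 'a set \<Rightarrow> bool" where
  "shatters G C \<longleftrightarrow> (\<forall>B\<subseteq>C. \<exists>g\<in>G. {c\<in>C. g c = 1} = B)"

definition has_VC_dim :: "('a \<Rightarrow> int) set \<Rightarrow> nat \<Rightarrow> bool" where
  "has_VC_dim G V \<longleftrightarrow>
     (\<exists>C. finite C \<and> card C = V \<and> shatters G C) \<and>
     (\<forall>C. finite C \<and> shatters G C \<longrightarrow> card C \<le> V)"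

end

theory Submission
  imports Defs "HOL-Analysis.Analysis"
begin


definition smp :: "nat set \<Rightarrow> nat \<Rightarrow> nat set set" where
  "smp U k = {s. s \<subseteq> U \<and> card s = k}"

definition SW :: "(nat \<Rightarrow> real) \<Rightarrow> nat set \<Rightarrow> nat \<Rightarrow> (nat set \<Rightarrow> real) \<Rightarrow> real" where
  "SW w U k f = (\<Sum>s\<in>smp U k. (\<Prod>i\<in>s. w i) * f s)"

lemma finite_smp: "finite U \<Longrightarrow> finite (smp U k)"
  unfolding smp_def by (rule finite_subset[of _ "Pow U"]) auto

lemma smp_0: "smp U 0 = {{}}" if "finite U"
  using that unfolding smp_def by (auto dest: finite_subset)

lemma SW_0: "finite U \<Longrightarrow> SW w U 0 f = f {}"
  by (simp add: SW_def smp_0)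

lemma smp_split:
  assumes "finite U" "a \<in> U" "k \<ge> 1"
  shows "smp U k = smp (U - {a}) k \<union> insert a ` smp (U - {a}) (k - 1)"
proof (intro equalityI subsetI)
  fix s assume s: "s \<in> smp U k"
  show "s \<in> smp (U - {a}) k \<union> insert a ` smp (U - {a}) (k - 1)"
  proof (cases "a \<in> s")
    case True
    have fs: "finite s" using s assms(1) unfolding smp_def by (auto dest: finite_subset)
    have "s - {a} \<in> smp (U - {a}) (k - 1)" using s True fs unfolding smp_def by auto
    moreover have "s = insert a (s - {a})" using True by auto
    ultimately show ?thesis by blast
  next
    case False then show ?thesis using s unfolding smp_def by auto
  qed
next
  fix s assume "s \<in> smp (U - {a}) k \<union> insert a ` smp (U - {a}) (k - 1)"
  then show "s \<in> smp U k"
  proof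
    assume "s \<in> smp (U - {a}) k" then show ?thesis unfolding smp_def by auto
  next
    assume "s \<in> insert a ` smp (U - {a}) (k - 1)"
    then obtain t where t: "t \<in> smp (U - {a}) (k - 1)" "s = insert a t" by auto
    have ft: "finite t" using t assms(1) unfolding smp_def by (auto dest: finite_subset)
    have "a \<notin> t" using t unfolding smp_def by auto
    then show ?thesis using t ft assms unfolding smp_def by auto
  qed
qed

lemma SW_split:
  assumes "finite U" "a \<in> U" "k \<ge> 1"
  shows "SW w U k f = SW w (U - {a}) k f + w a * SW w (U - {a}) (k - 1) (\<lambda>t. f (insert a t))"
proof -
  have disj: "smp (U - {a}) k \<inter> insert a ` smp (U - {a}) (k - 1) = {}"
    unfolding smp_def by auto
  have inj: "inj_on (insert a) (smp (U - {a}) (k - 1))"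
    unfolding smp_def inj_on_def by auto
  have fin1: "finite (smp (U - {a}) k)" "finite (smp (U - {a}) (k-1))"
    using assms(1) by (auto intro: finite_smp)
  have "SW w U k f = (\<Sum>s\<in>smp (U - {a}) k. (\<Prod>i\<in>s. w i) * f s)
       + (\<Sum>s\<in>insert a ` smp (U - {a}) (k - 1). (\<Prod>i\<in>s. w i) * f s)"
    unfolding SW_def smp_split[OF assms] by (rule sum.union_disjoint) (use fin1 disj in auto)
  also have "(\<Sum>s\<in>insert a ` smp (U - {a}) (k - 1). (\<Prod>i\<in>s. w i) * f s)
      = (\<Sum>t\<in>smp (U - {a}) (k - 1). (\<Prod>i\<in>insert a t. w i) * f (insert a t))"
    by (rule sum.reindex[OF inj, unfolded comp_def])
  also have "\<dots> = (\<Sum>t\<in>smp (U - {a}) (k - 1). w a * ((\<Prod>i\<in>t. w i) * f (insert a t)))"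
  proof (rule sum.cong[OF refl])
    fix t assume t: "t \<in> smp (U - {a}) (k - 1)"
    have ft: "finite t" using t assms(1) unfolding smp_def by (auto dest: finite_subset)
    have "a \<notin> t" using t unfolding smp_def by auto
    then show "(\<Prod>i\<in>insert a t. w i) * f (insert a t) = w a * ((\<Prod>i\<in>t. w i) * f (insert a t))"
      using ft by simp
  qed
  also have "\<dots> = w a * SW w (U - {a}) (k - 1) (\<lambda>t. f (insert a t))"
    unfolding SW_def by (rule sum_distrib_left[symmetric])
  finally show ?thesis unfolding SW_def .
qed

lemma SW_nonneg: "(\<And>i. i \<in> U \<Longrightarrow> w i \<ge> 0) \<Longrightarrow> (\<And>s. s \<in> smp U k \<Longrightarrow> f s \<ge> 0) \<Longrightarrow> SW w U k f \<ge> 0"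
  unfolding SW_def smp_def by (intro sum_nonneg mult_nonneg_nonneg prod_nonneg) auto

lemma SW_pos:
  assumes "finite U" "k \<le> card U" "\<And>i. i \<in> U \<Longrightarrow> w i > 0"
  shows "SW w U k (\<lambda>_. 1) > 0"
proof -
  obtain s where s: "s \<subseteq> U" "card s = k" using obtain_subset_with_card_n[OF assms(2)] by blast
  have "s \<in> smp U k" using s unfolding smp_def by auto
  have "0 < (\<Prod>i\<in>s. w i) * 1" using s assms(3) by (auto intro: prod_pos)
  also have "\<dots> \<le> SW w U k (\<lambda>_. 1)" unfolding SW_def
  proof (rule member_le_sum[OF \<open>s \<in> smp U k\<close>])
    fix t assume "t \<in> smp U k - {s}"
    then have "t \<subseteq> U" unfolding smp_def by auto
    then show "0 \<le> (\<Prod>i\<in>t. w i) * 1" using assms(3) by (simp add: prod_nonneg less_imp_le subset_iff)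
  qed (use assms(1) finite_smp in auto)
  finally show ?thesis .
qed

lemma SW_add: "SW w U k (\<lambda>s. f s + g s) = SW w U k f + SW w U k g"
  unfolding SW_def by (simp add: distrib_left sum.distrib)
lemma SW_cmult: "SW w U k (\<lambda>s. c * f s) = c * SW w U k f"
  unfolding SW_def by (simp add: sum_distrib_left mult_ac)
lemma SW_sum: "SW w U k (\<lambda>s. \<Sum>j\<in>J. f j s) = (\<Sum>j\<in>J. SW w U k (f j))"
  unfolding SW_def by (simp add: sum_distrib_left sum.swap[of _ J])
lemma SW_mono: "(\<And>i. i \<in> U \<Longrightarrow> w i \<ge> 0) \<Longrightarrow> (\<And>s. s \<in> smp U k \<Longrightarrow> f s \<le> g s) \<Longrightarrow> SW w U k f \<le> SW w U k g"
  unfolding SW_def smp_def by (intro sum_mono mult_left_mono prod_nonneg) auto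
lemma SW_cong: "(\<And>s. s \<in> smp U k \<Longrightarrow> f s = g s) \<Longrightarrow> SW w U k f = SW w U k g"
  unfolding SW_def by auto



definition Ei :: "(nat \<Rightarrow> real) \<Rightarrow> nat set \<Rightarrow> int \<Rightarrow> real" where
  "Ei w R j = (if j < 0 then 0 else SW w R (nat j) (\<lambda>_. 1))"

lemma Ei_insert:
  assumes "finite R" "x \<notin> R"
  shows "Ei w (insert x R) j = Ei w R j + w x * Ei w R (j - 1)"
proof -
  consider "j < 0" | "j = 0" | "j \<ge> 1" by linarith
  then show ?thesis
  proof cases
    case 1 then show ?thesis by (simp add: Ei_def)
  next
    case 2 then show ?thesis using assms by (simp add: Ei_def SW_0)
  next
    case 3
    have "SW w (insert x R) (nat j) (\<lambda>_. 1) = SW w (insert x R - {x}) (nat j) (\<lambda>_. 1)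
       + w x * SW w (insert x R - {x}) (nat j - 1) (\<lambda>_. 1)"
      using SW_split[of "insert x R" x "nat j" w "\<lambda>_. 1"] assms 3 by simp
    moreover have "insert x R - {x} = R" using assms by auto
    moreover have "nat j - 1 = nat (j - 1)" using 3 by simp
    ultimately show ?thesis using 3 by (simp add: Ei_def)
  qed
qed

lemma newton_gen:
  assumes "finite R" "\<And>i. i \<in> R \<Longrightarrow> w i \<ge> 0"
  shows "\<forall>a b. a \<le> b \<longrightarrow> Ei w R (a - 1) * Ei w R (b + 1) \<le> Ei w R a * Ei w R b"
  using assms
proof (induction R rule: finite_induct)
  case empty
  have E: "Ei w {} j = (if j = 0 then 1 else 0)" for j
    by (simp add: Ei_def SW_0 smp_def) (auto simp: SW_def smp_def card_eq_0_iff)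
  show ?case
  proof (intro allI impI)
    fix a b :: int assume "a \<le> b"
    then show "Ei w {} (a - 1) * Ei w {} (b + 1) \<le> Ei w {} a * Ei w {} b"
      unfolding E by auto
  qed
next
  case (insert x R)
  have IH: "\<And>a b. a \<le> b \<Longrightarrow> Ei w R (a - 1) * Ei w R (b + 1) \<le> Ei w R a * Ei w R b"
    using insert by auto
  have t: "w x \<ge> 0" using insert by auto
  define t where "t = w x"
  show ?case
  proof (intro allI impI)
    fix a b :: int assume ab: "a \<le> b"
    define E where "E = Ei w R"
    have h0: "E (a-1) * E (b+1) \<le> E a * E b" using IH ab unfolding E_def by auto
    have h2: "E (a-2) * E b \<le> E (a-1) * E (b-1)" using IH[of "a-1" "b-1"] ab unfolding E_def by (simp add: algebra_simps)
    have h1: "E (a-2) * E (b+1) \<le> E a * E (b-1)"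
    proof (cases "a = b")
      case True then show ?thesis using IH[of "a-1" "b"] unfolding E_def by (simp add: algebra_simps)
    next
      case False
      have "E (a-2) * E (b+1) \<le> E (a-1) * E b" using IH[of "a-1" "b"] ab unfolding E_def by (simp add: algebra_simps)
      also have "\<dots> \<le> E a * E (b-1)" using IH[of "a" "b-1"] ab False unfolding E_def by (simp add: algebra_simps)
      finally show ?thesis .
    qed
    have g1: "t * (E (a-2) * E (b+1)) \<le> t * (E a * E (b-1))" using h1 t unfolding t_def by (rule mult_left_mono)
    have g2: "(t*t) * (E (a-2) * E b) \<le> (t*t) * (E (a-1) * E (b-1))" using h2 t unfolding t_def by (intro mult_left_mono) auto
    have ins: "\<And>j. Ei w (insert x R) j = E j + t * E (j - 1)"
      unfolding E_def t_def using Ei_insert insert(1,2) by blast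
    have "(E (a-1) + t * E (a-2)) * (E (b+1) + t * E b) \<le> (E a + t * E (a-1)) * (E b + t * E (b-1))"
      using h0 g1 g2 by (simp add: algebra_simps)
    moreover have "a - 1 - 1 = a - 2" by simp
    ultimately show "Ei w (insert x R) (a - 1) * Ei w (insert x R) (b + 1) \<le> Ei w (insert x R) a * Ei w (insert x R) b"
      unfolding ins by simp
  qed
qed

lemma newton:
  assumes "finite R" "\<And>i. i \<in> R \<Longrightarrow> w i \<ge> 0"
  shows "SW w R m (\<lambda>_. 1) * SW w R (m+2) (\<lambda>_. 1) \<le> (SW w R (m+1) (\<lambda>_. 1))^2"
proof -
  have "Ei w R (int (m+1) - 1) * Ei w R (int (m+1) + 1) \<le> Ei w R (int (m+1)) * Ei w R (int (m+1))"
    using newton_gen[of R w, OF assms] by blast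
  moreover have "int (m+1) - 1 = int m" "int (m+1) + 1 = int (m+2)" by auto
  ultimately show ?thesis by (simp add: Ei_def power2_eq_square nat_add_distrib)
qed



definition EE :: "(nat \<Rightarrow> real) \<Rightarrow> nat set \<Rightarrow> nat \<Rightarrow> (nat set \<Rightarrow> real) \<Rightarrow> real" where
  "EE w U k f = SW w U k f / SW w U k (\<lambda>_. 1)"

abbreviation ind :: "bool \<Rightarrow> real" where "ind P \<equiv> (if P then 1 else 0)"

lemma SW_zero: "SW w U k (\<lambda>_. 0) = 0" unfolding SW_def by simp

lemma SW_in:
  assumes "finite U" "a \<in> U" "k \<ge> 1"
  shows "SW w U k (\<lambda>s. if a \<in> s then f s else 0) = w a * SW w (U - {a}) (k - 1) (\<lambda>t. f (insert a t))"
proof -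
  have "SW w (U - {a}) k (\<lambda>s. if a \<in> s then f s else 0) = SW w (U - {a}) k (\<lambda>_. 0)"
    by (rule SW_cong) (auto simp: smp_def)
  then show ?thesis using SW_split[OF assms, of w "\<lambda>s. if a \<in> s then f s else 0"] by (simp add: SW_zero)
qed

lemma EE_nonneg: "(\<And>i. i \<in> U \<Longrightarrow> w i \<ge> 0) \<Longrightarrow> (\<And>s. s \<in> smp U k \<Longrightarrow> f s \<ge> 0) \<Longrightarrow> EE w U k f \<ge> 0"
  unfolding EE_def by (intro divide_nonneg_nonneg SW_nonneg) auto

lemma EE_const1: "finite U \<Longrightarrow> k \<le> card U \<Longrightarrow> (\<And>i. i \<in> U \<Longrightarrow> w i > 0) \<Longrightarrow> EE w U k (\<lambda>_. 1) = 1"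
  unfolding EE_def using SW_pos[of U k w] by simp

lemma pi_formula:
  assumes "finite U" "a \<in> U" "k \<ge> 1"
  shows "EE w U k (\<lambda>s. ind (a \<in> s)) = w a * SW w (U - {a}) (k - 1) (\<lambda>_. 1) / SW w U k (\<lambda>_. 1)"
  unfolding EE_def using SW_in[OF assms, of w "\<lambda>_. 1"] by simp

lemma pairwise:
  assumes fin: "finite U" and aU: "a \<in> U" and iU: "i \<in> U" and ai: "a \<noteq> i" and k: "1 \<le> k" "k \<le> card U"
    and wpos: "\<And>j. j \<in> U \<Longrightarrow> w j > 0"
  shows "EE w (U - {a}) (k - 1) (\<lambda>s. ind (i \<in> s)) \<le> EE w U k (\<lambda>s. ind (i \<in> s))"
proof (cases "k = 1")
  case True
  have "EE w (U - {a}) (k - 1) (\<lambda>s. ind (i \<in> s)) = 0"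
    using True fin unfolding EE_def by (simp add: SW_0)
  moreover have "EE w U k (\<lambda>s. ind (i \<in> s)) \<ge> 0" using wpos by (intro EE_nonneg) (auto intro: less_imp_le)
  ultimately show ?thesis by simp
next
  case False
  define m where "m = k - 2"
  have m: "k = m + 2" using k False unfolding m_def by simp
  define R where "R = U - {a} - {i}"
  have finR: "finite R" "finite (U - {a})" "finite (U - {i})" using fin unfolding R_def by auto
  have R2: "U - {i} - {a} = R" unfolding R_def by auto
  have iUa: "i \<in> U - {a}" "a \<in> U - {i}" using ai aU iU by auto
  define e0 where "e0 = SW w R m (\<lambda>_. 1)"
  define e1 where "e1 = SW w R (m+1) (\<lambda>_. 1)"
  define e2 where "e2 = SW w R (m+2) (\<lambda>_. 1)"
  define wa where "wa = w a"
  define wi where "wi = w i"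
  have W: "SW w U k (\<lambda>_. 1) = (e2 + wi * e1) + wa * (e1 + wi * e0)"
    using SW_split[OF fin aU, of k w "\<lambda>_. 1"] SW_split[OF finR(2) iUa(1), of "m+2" w "\<lambda>_. 1"]
      SW_split[OF finR(2) iUa(1), of "m+1" w "\<lambda>_. 1"] m
    unfolding e0_def e1_def e2_def wa_def wi_def R_def by simp
  have Si: "SW w U k (\<lambda>s. ind (i \<in> s)) = wi * (e1 + wa * e0)"
    using SW_in[OF fin iU, of k w "\<lambda>_. 1"] SW_split[OF finR(3) iUa(2), of "m+1" w "\<lambda>_. 1"] m R2
    unfolding e0_def e1_def e2_def wa_def wi_def by simp
  have W': "SW w (U - {a}) (k - 1) (\<lambda>_. 1) = e1 + wi * e0"
    using SW_split[OF finR(2) iUa(1), of "m+1" w "\<lambda>_. 1"] m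
    unfolding e0_def e1_def e2_def wa_def wi_def R_def by simp
  have Si': "SW w (U - {a}) (k - 1) (\<lambda>s. ind (i \<in> s)) = wi * e0"
    using SW_in[OF finR(2) iUa(1), of "k - 1" w "\<lambda>_. 1"] m
    unfolding e0_def e1_def e2_def wa_def wi_def R_def by simp
  have posW: "SW w U k (\<lambda>_. 1) > 0" using SW_pos[OF fin k(2)] wpos by blast
  have posW': "SW w (U - {a}) (k - 1) (\<lambda>_. 1) > 0"
    using SW_pos[OF finR(2), of "k-1" w] wpos k aU fin by (simp add: card_Diff_singleton)
  have nw: "e0 * e2 \<le> e1^2" unfolding e0_def e1_def e2_def
    by (rule newton) (use finR wpos R_def in \<open>auto intro: less_imp_le\<close>)
  have wi0: "wi \<ge> 0" unfolding wi_def using wpos iU by (auto intro: less_imp_le)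
  have key: "wi * e0 * ((e2 + wi * e1) + wa * (e1 + wi * e0)) \<le> wi * (e1 + wa * e0) * (e1 + wi * e0)"
  proof -
    have "wi * (e0 * e2) \<le> wi * e1^2" using nw wi0 by (rule mult_left_mono)
    then show ?thesis by (simp add: algebra_simps power2_eq_square)
  qed
  show ?thesis unfolding EE_def
    using key posW posW' W Si W' Si' by (simp add: divide_simps)
qed

lemma negcorr:
  assumes "finite A"
  shows "finite U \<Longrightarrow> A \<subseteq> U \<Longrightarrow> k \<le> card U \<Longrightarrow> (\<And>j. j \<in> U \<Longrightarrow> w j > 0) \<Longrightarrow>
    EE w U k (\<lambda>s. ind (A \<subseteq> s)) \<le> (\<Prod>i\<in>A. EE w U k (\<lambda>s. ind (i \<in> s)))"
  using assms
proof (induction A arbitrary: U k rule: finite_induct)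
  case empty
  then show ?case using EE_const1[of U k w] by simp
next
  case (insert a A)
  have aU: "a \<in> U" and AU: "A \<subseteq> U" using insert by auto
  have wnn: "\<And>j. j \<in> U \<Longrightarrow> w j \<ge> 0" using insert by (auto intro: less_imp_le)
  show ?case
  proof (cases "k = 0")
    case True
    have "EE w U k (\<lambda>s. ind (insert a A \<subseteq> s)) = 0"
      using True insert(4) unfolding EE_def by (simp add: SW_0)
    moreover have "(\<Prod>i\<in>insert a A. EE w U k (\<lambda>s. ind (i \<in> s))) \<ge> 0"
      by (intro prod_nonneg EE_nonneg) (use wnn in auto)
    ultimately show ?thesis by simp
  next
    case False
    then have k1: "k \<ge> 1" by simp
    define W where "W = SW w U k (\<lambda>_. 1)"
    define W' where "W' = SW w (U - {a}) (k - 1) (\<lambda>_. 1)"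
    have posW: "W > 0" unfolding W_def using SW_pos insert by blast
    have posW': "W' > 0" unfolding W'_def
      using SW_pos[of "U - {a}" "k-1" w] insert aU by (simp add: card_Diff_singleton)
    have "SW w U k (\<lambda>s. ind (insert a A \<subseteq> s)) = SW w U k (\<lambda>s. if a \<in> s then ind (A \<subseteq> s) else 0)"
      by (rule SW_cong) auto
    also have "\<dots> = w a * SW w (U - {a}) (k - 1) (\<lambda>t. ind (A \<subseteq> insert a t))"
      using SW_in[OF insert(4) aU k1] by simp
    also have "SW w (U - {a}) (k - 1) (\<lambda>t. ind (A \<subseteq> insert a t)) = SW w (U - {a}) (k - 1) (\<lambda>t. ind (A \<subseteq> t))"
      using insert(2) by (intro SW_cong) auto
    finally have eq: "EE w U k (\<lambda>s. ind (insert a A \<subseteq> s)) = (w a * W' / W) * EE w (U - {a}) (k - 1) (\<lambda>t. ind (A \<subseteq> t))"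
      unfolding EE_def W_def W'_def using posW'[unfolded W'_def] by (simp add: field_simps)
    have pia: "EE w U k (\<lambda>s. ind (a \<in> s)) = w a * W' / W"
      unfolding W_def W'_def using pi_formula[OF insert(4) aU k1] .
    have pia0: "w a * W' / W \<ge> 0" using posW posW' wnn aU by simp
    have IH: "EE w (U - {a}) (k - 1) (\<lambda>t. ind (A \<subseteq> t)) \<le> (\<Prod>i\<in>A. EE w (U - {a}) (k - 1) (\<lambda>s. ind (i \<in> s)))"
      using insert aU by (intro insert.IH) (auto simp: card_Diff_singleton)
    also have "\<dots> \<le> (\<Prod>i\<in>A. EE w U k (\<lambda>s. ind (i \<in> s)))"
    proof (rule prod_mono)
      fix i assume i: "i \<in> A"
      have "i \<noteq> a" using i insert(2) by auto
      then show "0 \<le> EE w (U - {a}) (k - 1) (\<lambda>s. ind (i \<in> s)) \<and> EE w (U - {a}) (k - 1) (\<lambda>s. ind (i \<in> s)) \<le> EE w U k (\<lambda>s. ind (i \<in> s))"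
        using pairwise[OF insert(4) aU _ _ k1 insert(6)] i AU insert(7) wnn
        by (auto intro!: EE_nonneg)
    qed
    finally have "(w a * W' / W) * EE w (U - {a}) (k - 1) (\<lambda>t. ind (A \<subseteq> t)) \<le> (w a * W' / W) * (\<Prod>i\<in>A. EE w U k (\<lambda>s. ind (i \<in> s)))"
      using pia0 by (rule mult_left_mono)
    then show ?thesis unfolding eq using pia insert(1,2) by simp
  qed
qed



lemma EE_sum: "EE w U k (\<lambda>s. \<Sum>j\<in>J. f j s) = (\<Sum>j\<in>J. EE w U k (f j))"
  unfolding EE_def SW_sum by (simp add: sum_divide_distrib)
lemma EE_cmult: "EE w U k (\<lambda>s. c * f s) = c * EE w U k f"
  unfolding EE_def SW_cmult by simp
lemma EE_add: "EE w U k (\<lambda>s. f s + g s) = EE w U k f + EE w U k g"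
  unfolding EE_def SW_add by (simp add: add_divide_distrib)
lemma EE_mono: "(\<And>i. i \<in> U \<Longrightarrow> w i \<ge> 0) \<Longrightarrow> (\<And>s. s \<in> smp U k \<Longrightarrow> f s \<le> g s) \<Longrightarrow> EE w U k f \<le> EE w U k g"
  unfolding EE_def by (intro divide_right_mono SW_mono SW_nonneg) auto
lemma EE_cong: "(\<And>s. s \<in> smp U k \<Longrightarrow> f s = g s) \<Longrightarrow> EE w U k f = EE w U k g"
  unfolding EE_def using SW_cong[of U k f g w] by simp

lemma prod_ind: "finite X \<Longrightarrow> (\<Prod>i\<in>X. ind (i \<in> s)) = ind (X \<subseteq> s)"
proof (cases "X \<subseteq> s")
  case True
  then have "(\<Prod>i\<in>X. ind (i \<in> s)) = (\<Prod>i\<in>X. 1)" by (intro prod.cong) auto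
  then show ?thesis using True by simp
next
  case False
  assume "finite X"
  have "(\<Prod>i\<in>X. ind (i \<in> s)) = 0" using False \<open>finite X\<close> by (intro prod_zero) auto
  then show ?thesis using False by simp
qed

lemma prodbound:
  assumes fin: "finite U" and k: "k \<le> card U" and wpos: "\<And>j. j \<in> U \<Longrightarrow> w j > 0"
    and al: "\<And>i. i \<in> U \<Longrightarrow> \<alpha> i \<ge> 0"
  shows "EE w U k (\<lambda>s. \<Prod>i\<in>U. 1 + \<alpha> i * ind (i \<in> s)) \<le> (\<Prod>i\<in>U. 1 + \<alpha> i * EE w U k (\<lambda>s. ind (i \<in> s)))"
proof -
  have exp: "(\<Prod>i\<in>U. 1 + \<alpha> i * ind (i \<in> s)) = (\<Sum>X\<in>Pow U. (\<Prod>i\<in>X. \<alpha> i) * ind (X \<subseteq> s))" for s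
  proof -
    have "(\<Prod>i\<in>U. 1 + \<alpha> i * ind (i \<in> s)) = (\<Prod>i\<in>U. \<alpha> i * ind (i \<in> s) + 1)" by (simp add: add.commute)
    also have "\<dots> = (\<Sum>X\<in>Pow U. (\<Prod>i\<in>X. \<alpha> i * ind (i \<in> s)) * (\<Prod>i\<in>U-X. 1))"
      by (rule prod_add[OF fin])
    also have "\<dots> = (\<Sum>X\<in>Pow U. (\<Prod>i\<in>X. \<alpha> i) * ind (X \<subseteq> s))"
    proof (rule sum.cong[OF refl])
      fix X assume "X \<in> Pow U"
      then have "finite X" using fin by (auto dest: finite_subset)
      then show "(\<Prod>i\<in>X. \<alpha> i * ind (i \<in> s)) * (\<Prod>i\<in>U-X. 1) = (\<Prod>i\<in>X. \<alpha> i) * ind (X \<subseteq> s)"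
        by (simp add: prod.distrib prod_ind del: prod.neutral_const)
    qed
    finally show ?thesis .
  qed
  have "EE w U k (\<lambda>s. \<Prod>i\<in>U. 1 + \<alpha> i * ind (i \<in> s)) = (\<Sum>X\<in>Pow U. (\<Prod>i\<in>X. \<alpha> i) * EE w U k (\<lambda>s. ind (X \<subseteq> s)))"
    unfolding exp EE_sum EE_cmult ..
  also have "\<dots> \<le> (\<Sum>X\<in>Pow U. (\<Prod>i\<in>X. \<alpha> i) * (\<Prod>i\<in>X. EE w U k (\<lambda>s. ind (i \<in> s))))"
  proof (rule sum_mono)
    fix X assume X: "X \<in> Pow U"
    then have "finite X" using fin by (auto dest: finite_subset)
    have "EE w U k (\<lambda>s. ind (X \<subseteq> s)) \<le> (\<Prod>i\<in>X. EE w U k (\<lambda>s. ind (i \<in> s)))"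
      using negcorr[OF \<open>finite X\<close> fin _ k wpos] X by auto
    moreover have "(\<Prod>i\<in>X. \<alpha> i) \<ge> 0" using X al by (auto intro: prod_nonneg)
    ultimately show "(\<Prod>i\<in>X. \<alpha> i) * EE w U k (\<lambda>s. ind (X \<subseteq> s)) \<le> (\<Prod>i\<in>X. \<alpha> i) * (\<Prod>i\<in>X. EE w U k (\<lambda>s. ind (i \<in> s)))"
      by (simp add: mult_left_mono)
  qed
  also have "\<dots> = (\<Prod>i\<in>U. \<alpha> i * EE w U k (\<lambda>s. ind (i \<in> s)) + 1)"
    by (subst prod_add[OF fin]) (simp add: prod.distrib)
  finally show ?thesis by (simp add: add.commute)
qed

lemma complement:
  assumes fin: "finite U" and k: "k \<le> card U" and wpos: "\<And>j. j \<in> U \<Longrightarrow> w j > 0"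
  shows "EE w U k f = EE (\<lambda>i. 1 / w i) U (card U - k) (\<lambda>t. f (U - t))"
proof -
  have bij: "bij_betw (\<lambda>t. U - t) (smp U (card U - k)) (smp U k)"
  proof (rule bij_betw_byWitness[where f' = "\<lambda>t. U - t"])
    show "\<forall>a\<in>smp U (card U - k). U - (U - a) = a" unfolding smp_def by auto
    show "\<forall>a\<in>smp U k. U - (U - a) = a" unfolding smp_def by auto
    show "(\<lambda>t. U - t) ` smp U (card U - k) \<subseteq> smp U k"
    proof
      fix s assume "s \<in> (\<lambda>t. U - t) ` smp U (card U - k)"
      then obtain t where t: "t \<subseteq> U" "card t = card U - k" "s = U - t" unfolding smp_def by auto
      have "card (U - t) = card U - card t" using t fin by (simp add: card_Diff_subset finite_subset)
      then show "s \<in> smp U k" using t k unfolding smp_def by auto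
    qed
    show "(\<lambda>t. U - t) ` smp U k \<subseteq> smp U (card U - k)"
    proof
      fix s assume "s \<in> (\<lambda>t. U - t) ` smp U k"
      then obtain t where t: "t \<subseteq> U" "card t = k" "s = U - t" unfolding smp_def by auto
      have "card (U - t) = card U - card t" using t fin by (simp add: card_Diff_subset finite_subset)
      then show "s \<in> smp U (card U - k)" using t k unfolding smp_def by auto
    qed
  qed
  define P where "P = (\<Prod>i\<in>U. w i)"
  have Ppos: "P > 0" unfolding P_def using wpos by (simp add: prod_pos)
  have gen: "SW w U k g = P * SW (\<lambda>i. 1 / w i) U (card U - k) (\<lambda>t. g (U - t))" for g
  proof -
    have "SW w U k g = (\<Sum>t\<in>smp U (card U - k). (\<Prod>i\<in>U - t. w i) * g (U - t))"
      unfolding SW_def by (rule sum.reindex_bij_betw[OF bij, symmetric])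
    also have "\<dots> = (\<Sum>t\<in>smp U (card U - k). P * ((\<Prod>i\<in>t. 1 / w i) * g (U - t)))"
    proof (rule sum.cong[OF refl])
      fix t assume t: "t \<in> smp U (card U - k)"
      then have tU: "t \<subseteq> U" unfolding smp_def by auto
      have "P = (\<Prod>i\<in>U - t. w i) * (\<Prod>i\<in>t. w i)"
        unfolding P_def using prod.subset_diff[OF tU fin] by simp
      moreover have "(\<Prod>i\<in>t. w i) * (\<Prod>i\<in>t. 1 / w i) = 1"
      proof -
        have "(\<Prod>i\<in>t. w i) * (\<Prod>i\<in>t. 1 / w i) = (\<Prod>i\<in>t. w i * (1 / w i))"
          by (rule prod.distrib[symmetric])
        also have "\<dots> = (\<Prod>i\<in>t. 1)" using tU wpos by (intro prod.cong) (auto simp: subset_iff less_imp_neq[symmetric])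
        finally show ?thesis by simp
      qed
      ultimately show "(\<Prod>i\<in>U - t. w i) * g (U - t) = P * ((\<Prod>i\<in>t. 1 / w i) * g (U - t))"
        by (metis (no_types, lifting) mult.assoc mult.right_neutral)
    qed
    finally show ?thesis unfolding SW_def by (simp add: sum_distrib_left)
  qed
  show ?thesis unfolding EE_def gen[of f] gen[of "\<lambda>_. 1"] using Ppos by simp
qed



lemma fact_ge_3pow: "2 * 3 ^ n \<le> (fact (n + 2) :: nat)"
proof (induction n)
  case 0 then show ?case by (simp add: fact_numeral)
next
  case (Suc n)
  have "Suc n + 2 = Suc (n + 2)" by simp
  then have "fact (Suc n + 2) = Suc (n + 2) * (fact (n + 2) :: nat)"
    by (simp only: fact_Suc of_nat_id)
  also have "\<dots> \<ge> 3 * fact (n + 2)" by (intro mult_right_mono) auto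
  finally show ?case using Suc by simp
qed

lemma exp_bern:
  fixes x :: real assumes x: "0 \<le> x" "x < 3"
  shows "exp x \<le> 1 + x + x^2 / (2 * (1 - x / 3))"
proof -
  have s0: "(\<lambda>n. x^n / fact n) sums exp x" using exp_converges[of x] by (simp add: divide_inverse_commute scaleR_conv_of_real)
  define f where "f = (\<lambda>n. x^n / (fact n :: real))"
  have f0: "f 0 = 1" "f 1 = x" by (simp_all add: f_def)
  have a: "(\<lambda>n. f (Suc n)) sums (exp x - 1)" using sums_Suc_iff[of f "exp x - 1"] s0 f0
    by (simp add: f_def[symmetric])
  have b: "(\<lambda>n. f (Suc (Suc n))) sums (exp x - 1 - x)"
    using sums_Suc_iff[of "\<lambda>n. f (Suc n)" "exp x - 1 - x"] a f0 by simp
  have fe: "f (Suc (Suc n)) = x^(n+2) / fact (n+2)" for n unfolding f_def by (simp only: add_2_eq_Suc')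
  have s1: "(\<lambda>n. x^(n+2) / fact (n+2)) sums (exp x - 1 - x)" using b unfolding fe .
  have g: "(\<lambda>n. (x/3)^n) sums (1 / (1 - x/3))" by (rule geometric_sums) (use x in simp)
  have s2: "(\<lambda>n. x^2/2 * (x/3)^n) sums (x^2/2 * (1 / (1 - x/3)))" by (rule sums_mult[OF g])
  have le: "x^(n+2) / fact (n+2) \<le> x^2/2 * (x/3)^n" for n
  proof -
    have f: "real (2 * 3^n) \<le> real (fact (n+2))" using fact_ge_3pow[of n] by linarith
    have fp: "(0::real) < 2 * 3^n" by simp
    have "x^(n+2) / fact (n+2) \<le> x^(n+2) / (2 * 3^n)"
    proof (rule divide_left_mono)
      show "(2 * 3^n::real) \<le> fact (n+2)" using f by (simp only: of_nat_fact of_nat_mult of_nat_power of_nat_numeral)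
      show "0 \<le> x^(n+2)" using x by simp
      have "0 < (fact (n+2)::real)" by (rule fact_gt_zero)
      then show "0 < fact (n+2) * (2 * 3^n::real)" by simp
    qed
    also have "\<dots> = x^2/2 * (x/3)^n" by (simp add: power_add power_divide field_simps power2_eq_square)
    finally show ?thesis .
  qed
  have "exp x - 1 - x \<le> x^2/2 * (1 / (1 - x/3))" using sums_le[OF _ s1 s2] le by blast
  then show ?thesis by (simp add: field_simps)
qed

lemma exp_neg_bound:
  fixes y :: real assumes y: "0 \<le> y"
  shows "exp (- y) \<le> 1 - y + y^2 / 2"
proof -
  have e: "1 + y + y^2/2 \<le> exp y" using exp_lower_Taylor_quadratic[OF y] .
  have p: "0 < 1 + y + y^2/2" using y by (simp add: add_pos_nonneg)
  have q: "1 \<le> (1 - y + y^2/2) * (1 + y + y^2/2)"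
  proof -
    have "(1 - y + y^2/2) * (1 + y + y^2/2) = 1 + y^4/4" by (simp add: algebra_simps power2_eq_square power4_eq_xxxx)
    then show ?thesis by simp
  qed
  have "exp (- y) = 1 / exp y" by (simp add: exp_minus inverse_eq_divide)
  also have "\<dots> \<le> 1 / (1 + y + y^2/2)" by (rule divide_left_mono[OF e]) (use p in auto)
  also have "\<dots> \<le> 1 - y + y^2/2" using q p by (simp add: divide_simps)
  finally show ?thesis .
qed



lemma ind_le_exp: "(0::real) \<le> l \<Longrightarrow> ind (Y > T) \<le> exp (l * (Y - T))"
  by (cases "Y > T") (auto intro: order_trans[OF _ exp_ge_add_one_self] simp: )

lemma exp_ind: "exp (a * ind P) = 1 + (exp a - 1) * ind P" by auto

lemma prod_exp_le:
  fixes u :: "nat \<Rightarrow> real"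
  assumes "finite U" "\<And>i. i \<in> U \<Longrightarrow> 0 \<le> 1 + u i"
  shows "(\<Prod>i\<in>U. 1 + u i) \<le> exp (\<Sum>i\<in>U. u i)"
proof -
  have "(\<Prod>i\<in>U. 1 + u i) \<le> (\<Prod>i\<in>U. exp (u i))"
    by (rule prod_mono) (use assms(2) in auto)
  then show ?thesis using exp_sum[OF assms(1), of u] by simp
qed

locale design =
  fixes w :: "nat \<Rightarrow> real" and U :: "nat set" and k :: nat
  assumes fin: "finite U" and k: "k \<le> card U" and wpos: "\<And>j. j \<in> U \<Longrightarrow> w j > 0"
begin

definition pi :: "nat \<Rightarrow> real" where "pi i = EE w U k (\<lambda>s. ind (i \<in> s))"

lemma wnn: "i \<in> U \<Longrightarrow> w i \<ge> 0" using wpos by (auto intro: less_imp_le)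

lemma pi_nonneg: "pi i \<ge> 0" unfolding pi_def by (rule EE_nonneg) (auto intro: wnn)

lemma pi_le1: "pi i \<le> 1"
proof -
  have "pi i \<le> EE w U k (\<lambda>_. 1)" unfolding pi_def by (rule EE_mono) (auto intro: wnn)
  then show ?thesis using EE_const1[OF fin k wpos] by simp
qed

lemma upper_tail:
  assumes c: "\<And>i. i \<in> U \<Longrightarrow> 0 \<le> c i \<and> c i \<le> \<beta>" and v: "(\<Sum>i\<in>U. pi i * (c i)^2) \<le> \<beta>"
    and l: "0 < l" "l * \<beta> < 3"
  shows "EE w U k (\<lambda>s. ind ((\<Sum>i\<in>U. c i * (ind (i \<in> s) - pi i)) > T))
     \<le> exp (- l * T + l^2 * \<beta> / (2 * (1 - l * \<beta> / 3)))"
proof -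
  define C where "C = exp (- l * T - l * (\<Sum>i\<in>U. c i * pi i))"
  define \<alpha> where "\<alpha> i = exp (l * c i) - 1" for i
  have \<alpha>0: "i \<in> U \<Longrightarrow> \<alpha> i \<ge> 0" for i using c[of i] l unfolding \<alpha>_def by simp
  have rep: "exp (l * ((\<Sum>i\<in>U. c i * (ind (i \<in> s) - pi i)) - T)) = C * (\<Prod>i\<in>U. 1 + \<alpha> i * ind (i \<in> s))" for s
  proof -
    have "l * ((\<Sum>i\<in>U. c i * (ind (i \<in> s) - pi i)) - T) = (- l * T - l * (\<Sum>i\<in>U. c i * pi i)) + (\<Sum>i\<in>U. l * c i * ind (i \<in> s))"
      by (simp add: algebra_simps sum_subtractf sum_distrib_left)
    then have "exp (l * ((\<Sum>i\<in>U. c i * (ind (i \<in> s) - pi i)) - T)) = C * exp (\<Sum>i\<in>U. l * c i * ind (i \<in> s))"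
      unfolding C_def by (simp add: exp_add)
    also have "exp (\<Sum>i\<in>U. l * c i * ind (i \<in> s)) = (\<Prod>i\<in>U. 1 + \<alpha> i * ind (i \<in> s))"
      unfolding exp_sum[OF fin] \<alpha>_def by (intro prod.cong refl) auto
    finally show ?thesis .
  qed
  have "EE w U k (\<lambda>s. ind ((\<Sum>i\<in>U. c i * (ind (i \<in> s) - pi i)) > T))
      \<le> EE w U k (\<lambda>s. exp (l * ((\<Sum>i\<in>U. c i * (ind (i \<in> s) - pi i)) - T)))"
    by (rule EE_mono) (use l ind_le_exp wnn in auto)
  also have "\<dots> = C * EE w U k (\<lambda>s. \<Prod>i\<in>U. 1 + \<alpha> i * ind (i \<in> s))"
    unfolding rep EE_cmult ..
  also have "\<dots> \<le> C * (\<Prod>i\<in>U. 1 + \<alpha> i * pi i)"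
    unfolding pi_def C_def by (intro mult_left_mono prodbound[OF fin k wpos]) (auto intro: \<alpha>0)
  also have "\<dots> \<le> C * exp (\<Sum>i\<in>U. \<alpha> i * pi i)"
    by (intro mult_left_mono prod_exp_le fin) (use \<alpha>0 pi_nonneg C_def in auto)
  also have "\<dots> = exp (- l * T + (\<Sum>i\<in>U. pi i * (exp (l * c i) - 1 - l * c i)))"
    unfolding C_def \<alpha>_def by (simp add: exp_add[symmetric] algebra_simps sum_subtractf sum_distrib_left sum.distrib)
  also have "\<dots> \<le> exp (- l * T + l^2 * \<beta> / (2 * (1 - l * \<beta> / 3)))"
  proof -
    have d: "0 < 1 - l * \<beta> / 3" using l by simp
    have "(\<Sum>i\<in>U. pi i * (exp (l * c i) - 1 - l * c i)) \<le> (\<Sum>i\<in>U. pi i * (c i)^2 * (l^2 / (2 * (1 - l * \<beta> / 3))))"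
    proof (rule sum_mono)
      fix i assume i: "i \<in> U"
      have ci: "0 \<le> c i" "c i \<le> \<beta>" using c[OF i] by auto
      have lc: "0 \<le> l * c i" "l * c i < 3" using ci l by (auto intro: le_less_trans[OF mult_left_mono[OF ci(2)]])
      have "exp (l * c i) - 1 - l * c i \<le> (l * c i)^2 / (2 * (1 - l * c i / 3))"
        using exp_bern[OF lc] by simp
      also have "\<dots> \<le> (l * c i)^2 / (2 * (1 - l * \<beta> / 3))"
        by (rule divide_left_mono) (use d ci l lc in \<open>auto simp: mult.commute intro!: mult_pos_pos mult_left_mono\<close>)
      also have "\<dots> = (c i)^2 * (l^2 / (2 * (1 - l * \<beta> / 3)))" by (simp add: power_mult_distrib)
      finally have "exp (l * c i) - 1 - l * c i \<le> (c i)^2 * (l^2 / (2 * (1 - l * \<beta> / 3)))" .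
      from mult_left_mono[OF this pi_nonneg[of i]]
      show "pi i * (exp (l * c i) - 1 - l * c i) \<le> pi i * (c i)^2 * (l^2 / (2 * (1 - l * \<beta> / 3)))"
        by (simp only: mult.assoc)
    qed
    also have "\<dots> = (\<Sum>i\<in>U. pi i * (c i)^2) * (l^2 / (2 * (1 - l * \<beta> / 3)))"
      by (rule sum_distrib_right[symmetric])
    also have "\<dots> \<le> \<beta> * (l^2 / (2 * (1 - l * \<beta> / 3)))"
      by (rule mult_right_mono[OF v]) (use d in \<open>intro divide_nonneg_pos; simp add: mult.commute\<close>)
    finally show ?thesis by (simp add: mult.commute)
  qed
  finally show ?thesis .
qed


lemma comp_design: "design (\<lambda>i. 1 / w i) U (card U - k)"
  using fin wpos by unfold_locales auto

lemma pi_comp: "i \<in> U \<Longrightarrow> EE (\<lambda>i. 1 / w i) U (card U - k) (\<lambda>t. ind (i \<in> t)) = 1 - pi i"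
proof -
  assume i: "i \<in> U"
  have "EE w U k (\<lambda>s. ind (i \<in> U - s)) = EE (\<lambda>i. 1 / w i) U (card U - k) (\<lambda>t. ind (i \<in> U - (U - t)))"
    by (rule complement[OF fin k wpos])
  also have "\<dots> = EE (\<lambda>i. 1 / w i) U (card U - k) (\<lambda>t. ind (i \<in> t))"
    by (rule EE_cong) (use i in \<open>auto simp: smp_def\<close>)
  finally have 1: "EE (\<lambda>i. 1 / w i) U (card U - k) (\<lambda>t. ind (i \<in> t)) = EE w U k (\<lambda>s. ind (i \<in> U - s))" by simp
  have "EE w U k (\<lambda>s. ind (i \<in> U - s)) = EE w U k (\<lambda>s. 1 + (-1) * ind (i \<in> s))"
    by (rule EE_cong) (use i in auto)
  also have "\<dots> = 1 - pi i" unfolding EE_add EE_cmult pi_def using EE_const1[OF fin k wpos] by simp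
  finally show ?thesis using 1 by simp
qed

lemma lower_tail:
  assumes c: "\<And>i. i \<in> U \<Longrightarrow> 0 \<le> c i \<and> c i \<le> \<beta>" and v: "(\<Sum>i\<in>U. pi i * (c i)^2) \<le> \<beta>"
    and l: "0 < l"
  shows "EE w U k (\<lambda>s. ind (- (\<Sum>i\<in>U. c i * (ind (i \<in> s) - pi i)) > T))
     \<le> exp (- l * T + l^2 * \<beta> / 2)"
proof -
  define C where "C = exp (- l * T + l * (\<Sum>i\<in>U. c i * pi i) - l * (\<Sum>i\<in>U. c i))"
  define \<alpha> where "\<alpha> i = exp (l * c i) - 1" for i
  have \<alpha>0: "i \<in> U \<Longrightarrow> \<alpha> i \<ge> 0" for i using c[of i] l unfolding \<alpha>_def by simp
  have rep: "exp (l * (- (\<Sum>i\<in>U. c i * (ind (i \<in> s) - pi i)) - T)) = C * (\<Prod>i\<in>U. 1 + \<alpha> i * ind (i \<notin> s))" for s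
  proof -
    have "(\<Sum>i\<in>U. l * c i * ind (i \<notin> s)) = (\<Sum>i\<in>U. l * c i - l * c i * ind (i \<in> s))"
      by (intro sum.cong) auto
    then have "l * (- (\<Sum>i\<in>U. c i * (ind (i \<in> s) - pi i)) - T) = (- l * T + l * (\<Sum>i\<in>U. c i * pi i) - l * (\<Sum>i\<in>U. c i)) + (\<Sum>i\<in>U. l * c i * ind (i \<notin> s))"
      by (simp add: algebra_simps sum_subtractf sum_distrib_left)
    then have "exp (l * (- (\<Sum>i\<in>U. c i * (ind (i \<in> s) - pi i)) - T)) = C * exp (\<Sum>i\<in>U. l * c i * ind (i \<notin> s))"
      unfolding C_def by (simp add: exp_add)
    also have "exp (\<Sum>i\<in>U. l * c i * ind (i \<notin> s)) = (\<Prod>i\<in>U. 1 + \<alpha> i * ind (i \<notin> s))"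
      unfolding exp_sum[OF fin] \<alpha>_def by (intro prod.cong refl) auto
    finally show ?thesis .
  qed
  interpret cd: design "\<lambda>i. 1 / w i" U "card U - k" by (rule comp_design)
  have "EE w U k (\<lambda>s. ind (- (\<Sum>i\<in>U. c i * (ind (i \<in> s) - pi i)) > T))
      \<le> EE w U k (\<lambda>s. exp (l * (- (\<Sum>i\<in>U. c i * (ind (i \<in> s) - pi i)) - T)))"
    by (rule EE_mono) (use l ind_le_exp wnn in auto)
  also have "\<dots> = C * EE w U k (\<lambda>s. \<Prod>i\<in>U. 1 + \<alpha> i * ind (i \<notin> s))"
    unfolding rep EE_cmult ..
  also have "EE w U k (\<lambda>s. \<Prod>i\<in>U. 1 + \<alpha> i * ind (i \<notin> s))
      = EE (\<lambda>i. 1 / w i) U (card U - k) (\<lambda>t. \<Prod>i\<in>U. 1 + \<alpha> i * ind (i \<notin> U - t))"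
    by (rule complement[OF fin k wpos])
  also have "\<dots> = EE (\<lambda>i. 1 / w i) U (card U - k) (\<lambda>t. \<Prod>i\<in>U. 1 + \<alpha> i * ind (i \<in> t))"
    by (intro EE_cong prod.cong refl) (auto simp: smp_def)
  also have "C * \<dots> \<le> C * (\<Prod>i\<in>U. 1 + \<alpha> i * (1 - pi i))"
  proof -
    have "EE (\<lambda>i. 1 / w i) U (card U - k) (\<lambda>t. \<Prod>i\<in>U. 1 + \<alpha> i * ind (i \<in> t))
       \<le> (\<Prod>i\<in>U. 1 + \<alpha> i * EE (\<lambda>i. 1 / w i) U (card U - k) (\<lambda>t. ind (i \<in> t)))"
      by (rule prodbound[OF cd.fin cd.k cd.wpos]) (auto intro: \<alpha>0)
    also have "\<dots> = (\<Prod>i\<in>U. 1 + \<alpha> i * (1 - pi i))"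
      by (intro prod.cong refl) (simp add: pi_comp)
    finally show ?thesis unfolding C_def by (intro mult_left_mono) auto
  qed
  also have "C * (\<Prod>i\<in>U. 1 + \<alpha> i * (1 - pi i)) = exp (- l * T + l * (\<Sum>i\<in>U. c i * pi i)) * (\<Prod>i\<in>U. 1 + pi i * (exp (- l * c i) - 1))"
  proof -
    have "C = exp (- l * T + l * (\<Sum>i\<in>U. c i * pi i)) * (\<Prod>i\<in>U. exp (- l * c i))"
      unfolding C_def exp_sum[OF fin, symmetric] by (simp add: exp_diff exp_minus sum_negf sum_distrib_left divide_inverse)
    moreover have "(\<Prod>i\<in>U. exp (- l * c i)) * (\<Prod>i\<in>U. 1 + \<alpha> i * (1 - pi i)) = (\<Prod>i\<in>U. 1 + pi i * (exp (- l * c i) - 1))"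
      unfolding prod.distrib[symmetric]
    proof (intro prod.cong refl)
      fix i
      have "exp (- l * c i) * exp (l * c i) = 1" by (simp add: exp_add[symmetric])
      then show "exp (- l * c i) * (1 + \<alpha> i * (1 - pi i)) = 1 + pi i * (exp (- l * c i) - 1)"
        unfolding \<alpha>_def by (simp add: algebra_simps)
    qed
    ultimately show ?thesis by (simp add: mult.assoc)
  qed
  also have "\<dots> \<le> exp (- l * T + l * (\<Sum>i\<in>U. c i * pi i)) * exp (\<Sum>i\<in>U. pi i * (exp (- l * c i) - 1))"
  proof (intro mult_left_mono prod_exp_le fin)
    fix i assume "i \<in> U"
    have "0 \<le> pi i * exp (- l * c i)" using pi_nonneg by simp
    then show "0 \<le> 1 + pi i * (exp (- l * c i) - 1)" using pi_le1[of i] by (simp add: algebra_simps)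
  qed simp
  also have "\<dots> = exp (- l * T + (\<Sum>i\<in>U. pi i * (exp (- (l * c i)) - 1 + l * c i)))"
  proof -
    have e1: "l * (\<Sum>i\<in>U. c i * pi i) + (\<Sum>i\<in>U. pi i * (exp (- l * c i) - 1)) = (\<Sum>i\<in>U. l * (c i * pi i) + pi i * (exp (- l * c i) - 1))"
      by (simp add: sum.distrib sum_distrib_left)
    have e2: "(\<Sum>i\<in>U. l * (c i * pi i) + pi i * (exp (- l * c i) - 1)) = (\<Sum>i\<in>U. pi i * (exp (- (l * c i)) - 1 + l * c i))"
      by (intro sum.cong) (simp_all add: algebra_simps)
    show ?thesis unfolding exp_add[symmetric] using e1 e2 by (simp add: algebra_simps)
  qed
  also have "\<dots> \<le> exp (- l * T + l^2 * \<beta> / 2)"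
  proof -
    have "(\<Sum>i\<in>U. pi i * (exp (- (l * c i)) - 1 + l * c i)) \<le> (\<Sum>i\<in>U. pi i * (c i)^2 * (l^2 / 2))"
    proof (rule sum_mono)
      fix i assume i: "i \<in> U"
      have "0 \<le> l * c i" using c[OF i] l by simp
      from exp_neg_bound[OF this]
      have "exp (- (l * c i)) - 1 + l * c i \<le> (c i)^2 * (l^2 / 2)" by (simp add: power_mult_distrib algebra_simps)
      from mult_left_mono[OF this pi_nonneg[of i]]
      show "pi i * (exp (- (l * c i)) - 1 + l * c i) \<le> pi i * (c i)^2 * (l^2 / 2)"
        by (simp only: mult.assoc)
    qed
    also have "\<dots> = (\<Sum>i\<in>U. pi i * (c i)^2) * (l^2 / 2)"
      by (rule sum_distrib_right[symmetric])
    also have "\<dots> \<le> \<beta> * (l^2 / 2)"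
      by (rule mult_right_mono[OF v]) simp
    finally show ?thesis by (simp add: mult.commute)
  qed
  finally show ?thesis .
qed

end


lemma bern_alg:
  fixes \<beta> L :: real
  assumes b: "\<beta> > 0" and L: "L > 0"
  defines "T \<equiv> 2 * \<beta> * L / 3 + sqrt (2 * \<beta> * L)"
  defines "l \<equiv> 3 * T / (\<beta> * (3 + T))"
  shows "0 < l" "l * \<beta> < 3" "- l * T + l^2 * \<beta> / (2 * (1 - l * \<beta> / 3)) \<le> - L"
    "- l * T + l^2 * \<beta> / 2 \<le> - L"
proof -
  define u where "u = 2 * \<beta> * L / 3"
  define v where "v = sqrt (2 * \<beta> * L)"
  have u0: "u > 0" unfolding u_def using b L by simp
  have v0: "v > 0" unfolding v_def using b L by simp
  have v2: "v^2 = 2 * \<beta> * L" unfolding v_def using b L by simp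
  have T: "T = u + v" unfolding T_def u_def v_def ..
  have T0: "T > 0" using u0 v0 T by simp
  show l0: "0 < l" unfolding l_def using T0 b by simp
  have nz: "3 + T \<noteq> 0" "\<beta> \<noteq> 0" using T0 b by auto
  have lb: "l * \<beta> = 3 * T / (3 + T)"
  proof -
    have "l * \<beta> = (\<beta> * (3 * T)) / (\<beta> * (3 + T))" unfolding l_def by (simp add: mult.commute)
    also have "\<dots> = 3 * T / (3 + T)" using nz(2) by (rule mult_divide_mult_cancel_left)
    finally show ?thesis .
  qed
  show "l * \<beta> < 3" unfolding lb using T0 by (simp add: field_simps)
  have d: "1 - l * \<beta> / 3 = 3 / (3 + T)" unfolding lb using T0 by (simp add: field_simps)
  have ex: "- l * T + l^2 * \<beta> / (2 * (1 - l * \<beta> / 3)) = - (3 * T^2 / (2 * \<beta> * (3 + T)))"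
  proof -
    have "l^2 * \<beta> / (2 * (3 / (3 + T))) = l * (l * \<beta>) * (3 + T) / 6"
      using nz by (simp add: power2_eq_square field_simps)
    also have "\<dots> = l * T / 2" unfolding lb using nz by (simp add: field_simps)
    finally have 1: "l^2 * \<beta> / (2 * (3 / (3 + T))) = l * T / 2" .
    have 2: "l * T = 3 * T^2 / (\<beta> * (3 + T))" unfolding l_def by (simp add: power2_eq_square)
    have 3: "3 * T^2 / (2 * \<beta> * (3 + T)) = (3 * T^2 / (\<beta> * (3 + T))) / 2"
      by (simp add: divide_divide_eq_left mult.assoc)
    show ?thesis unfolding d 1 3 2[symmetric] by simp
  qed
  have key: "T^2 \<ge> 2 * \<beta> * L + (2 * \<beta> * L / 3) * T"
  proof -
    have "T^2 = u^2 + 2 * u * v + v^2" unfolding T by (simp add: power2_sum)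
    moreover have "(2 * \<beta> * L / 3) * T = u^2 + u * v" unfolding T u_def by (simp add: power2_eq_square algebra_simps)
    moreover have "u * v \<ge> 0" using u0 v0 by simp
    ultimately show ?thesis using v2 by simp
  qed
  have "L \<le> 3 * T^2 / (2 * \<beta> * (3 + T))"
  proof -
    have "L * (2 * \<beta> * (3 + T)) \<le> 3 * T^2" using key by (simp add: algebra_simps)
    moreover have D: "0 < 2 * \<beta> * (3 + T)" using b T0 by simp
    ultimately show ?thesis using pos_le_divide_eq[OF D] by simp
  qed
  then show up: "- l * T + l^2 * \<beta> / (2 * (1 - l * \<beta> / 3)) \<le> - L" unfolding ex by simp
  have "l^2 * \<beta> / 2 \<le> l^2 * \<beta> / (2 * (1 - l * \<beta> / 3))"
  proof (rule divide_left_mono)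
    show "2 * (1 - l * \<beta> / 3) \<le> 2" using l0 b by simp
    show "0 \<le> l^2 * \<beta>" using b by simp
    show "0 < 2 * (2 * (1 - l * \<beta> / 3))" unfolding d using T0 by simp
  qed
  then show "- l * T + l^2 * \<beta> / 2 \<le> - L" using up by linarith
qed

context design begin

lemma two_tail:
  assumes c: "\<And>i. i \<in> U \<Longrightarrow> 0 \<le> c i \<and> c i \<le> \<beta>" and v: "(\<Sum>i\<in>U. pi i * (c i)^2) \<le> \<beta>"
    and b: "\<beta> > 0" and L: "L > 0"
  shows "EE w U k (\<lambda>s. ind (\<bar>\<Sum>i\<in>U. c i * (ind (i \<in> s) - pi i)\<bar> > 2 * \<beta> * L / 3 + sqrt (2 * \<beta> * L)))
     \<le> 2 * exp (- L)"
proof -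
  define T where "T = 2 * \<beta> * L / 3 + sqrt (2 * \<beta> * L)"
  define l where "l = 3 * T / (\<beta> * (3 + T))"
  note A = bern_alg[OF b L, folded T_def, folded l_def]
  have "EE w U k (\<lambda>s. ind (\<bar>\<Sum>i\<in>U. c i * (ind (i \<in> s) - pi i)\<bar> > T))
      \<le> EE w U k (\<lambda>s. ind ((\<Sum>i\<in>U. c i * (ind (i \<in> s) - pi i)) > T) + ind (- (\<Sum>i\<in>U. c i * (ind (i \<in> s) - pi i)) > T))"
    by (rule EE_mono) (auto intro: wnn)
  also have "\<dots> = EE w U k (\<lambda>s. ind ((\<Sum>i\<in>U. c i * (ind (i \<in> s) - pi i)) > T)) + EE w U k (\<lambda>s. ind (- (\<Sum>i\<in>U. c i * (ind (i \<in> s) - pi i)) > T))"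
    by (rule EE_add)
  also have "\<dots> \<le> exp (- L) + exp (- L)"
  proof (rule add_mono)
    show "EE w U k (\<lambda>s. ind ((\<Sum>i\<in>U. c i * (ind (i \<in> s) - pi i)) > T)) \<le> exp (- L)"
      using upper_tail[OF c v A(1) A(2), of T] A(3) by (meson exp_le_cancel_iff order_trans)
    show "EE w U k (\<lambda>s. ind (- (\<Sum>i\<in>U. c i * (ind (i \<in> s) - pi i)) > T)) \<le> exp (- L)"
      using lower_tail[OF c v A(1), of T] A(4) by (meson exp_le_cancel_iff order_trans)
  qed
  finally show ?thesis unfolding T_def by simp
qed

end


definition shat :: "'a set set \<Rightarrow> 'a set \<Rightarrow> bool" where
  "shat F C \<longleftrightarrow> (\<forall>B\<subseteq>C. \<exists>S\<in>F. S \<inter> C = B)"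

lemma pajor:
  assumes "finite X"
  shows "(\<forall>S\<in>F. S \<subseteq> X) \<Longrightarrow> card F \<le> card {C. C \<subseteq> X \<and> shat F C}"
  using assms
proof (induction X arbitrary: F rule: finite_induct)
  case empty
  then have F: "F \<subseteq> {{}}" by auto
  show ?case
  proof (cases "F = {}")
    case True then show ?thesis by simp
  next
    case False
    then have F1: "F = {{}}" using F by auto
    then have "{C. C \<subseteq> {} \<and> shat F C} = {{}}" by (auto simp: shat_def)
    then show ?thesis using F1 by simp
  qed
next
  case (insert x X)
  define A0 where "A0 = {S\<in>F. x \<notin> S}"
  define A1 where "A1 = (\<lambda>S. S - {x}) ` {S\<in>F. x \<in> S}"
  define F0 where "F0 = A0 \<union> A1"
  define F1 where "F1 = A0 \<inter> A1"
  have finF: "finite F" by (rule finite_subset[of _ "Pow (insert x X)"]) (use insert in auto)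
  have finA: "finite A0" "finite A1" unfolding A0_def A1_def using finF by auto
  have A0X: "\<forall>S\<in>A0. S \<subseteq> X" unfolding A0_def using insert(4) by auto
  have A1X: "\<forall>S\<in>A1. S \<subseteq> X" unfolding A1_def using insert(4) by auto
  have cF: "card F = card A0 + card A1"
  proof -
    have "F = {S\<in>F. x \<notin> S} \<union> {S\<in>F. x \<in> S}" by auto
    moreover have "card ({S\<in>F. x \<notin> S} \<union> {S\<in>F. x \<in> S}) = card {S\<in>F. x \<notin> S} + card {S\<in>F. x \<in> S}"
      by (rule card_Un_disjoint) (use finF in auto)
    ultimately have "card F = card {S\<in>F. x \<notin> S} + card {S\<in>F. x \<in> S}" by simp
    moreover have "card A1 = card {S\<in>F. x \<in> S}" unfolding A1_def
      by (rule card_image) (auto simp: inj_on_def)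
    ultimately show ?thesis unfolding A0_def by simp
  qed
  have cF01: "card A0 + card A1 = card F0 + card F1"
    unfolding F0_def F1_def using card_Un_Int[OF finA] .
  define Sh where "Sh = {C. C \<subseteq> insert x X \<and> shat F C}"
  define Sh0 where "Sh0 = {C. C \<subseteq> X \<and> shat F0 C}"
  define Sh1 where "Sh1 = {C. C \<subseteq> X \<and> shat F1 C}"
  have IH0: "card F0 \<le> card Sh0" unfolding Sh0_def by (rule insert.IH) (use A0X A1X F0_def in auto)
  have IH1: "card F1 \<le> card Sh1" unfolding Sh1_def by (rule insert.IH) (use A0X A1X F1_def in auto)
  have sub0: "Sh0 \<subseteq> Sh"
  proof
    fix C assume C: "C \<in> Sh0"
    then have CX: "C \<subseteq> X" and sh: "shat F0 C" unfolding Sh0_def by auto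
    have "shat F C" unfolding shat_def
    proof (intro allI impI)
      fix B assume "B \<subseteq> C"
      then obtain S' where S': "S' \<in> F0" "S' \<inter> C = B" using sh unfolding shat_def by blast
      show "\<exists>S\<in>F. S \<inter> C = B"
      proof (cases "S' \<in> A0")
        case True then show ?thesis using S' unfolding A0_def by auto
      next
        case False
        then have "S' \<in> A1" using S' F0_def by auto
        then obtain S where S: "S \<in> F" "S' = S - {x}" unfolding A1_def by auto
        have "S \<inter> C = S' \<inter> C" using S CX insert(2) by auto
        then show ?thesis using S S' by auto
      qed
    qed
    then show "C \<in> Sh" unfolding Sh_def using CX by auto
  qed
  have sub1: "insert x ` Sh1 \<subseteq> Sh"
  proof
    fix D assume "D \<in> insert x ` Sh1"
    then obtain C where D: "D = insert x C" and CX: "C \<subseteq> X" and sh: "shat F1 C" unfolding Sh1_def by auto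
    have xC: "x \<notin> C" using CX insert(2) by auto
    have "shat F (insert x C)" unfolding shat_def
    proof (intro allI impI)
      fix B assume B: "B \<subseteq> insert x C"
      have "B - {x} \<subseteq> C" using B by auto
      then obtain T where T: "T \<in> F1" "T \<inter> C = B - {x}" using sh unfolding shat_def by blast
      have TA0: "T \<in> F" "x \<notin> T" using T unfolding F1_def A0_def by auto
      have "T \<in> A1" using T F1_def by auto
      then obtain S where S: "S \<in> F" "x \<in> S" "T = S - {x}" unfolding A1_def by auto
      have "insert x T = S" using S by auto
      then have iT: "insert x T \<in> F" using S by simp
      show "\<exists>S\<in>F. S \<inter> insert x C = B"
      proof (cases "x \<in> B")
        case True
        have "insert x T \<inter> insert x C = B" using T(2) True by auto
        then show ?thesis using iT by blast
      next
        case False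
        have "T \<inter> insert x C = B" using T(2) False TA0(2) by auto
        then show ?thesis using TA0(1) by blast
      qed
    qed
    then show "D \<in> Sh" unfolding Sh_def D using CX by auto
  qed
  have finSh: "finite Sh" unfolding Sh_def by (rule finite_subset[of _ "Pow (insert x X)"]) (use insert(1) in auto)
  have disj: "Sh0 \<inter> insert x ` Sh1 = {}" unfolding Sh0_def Sh1_def using insert(2) by auto
  have inj: "inj_on (insert x) Sh1"
  proof (rule inj_onI)
    fix C D assume CD: "C \<in> Sh1" "D \<in> Sh1" "insert x C = insert x D"
    then have "x \<notin> C" "x \<notin> D" using insert(2) unfolding Sh1_def by auto
    then show "C = D" using CD(3) by (metis Diff_insert_absorb)
  qed
  have finSh01: "finite Sh0" "finite Sh1" unfolding Sh0_def Sh1_def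
    by (rule finite_subset[of _ "Pow X"], use insert(1) in auto)+
  have "card Sh0 + card Sh1 = card (Sh0 \<union> insert x ` Sh1)"
    using card_Un_disjoint[OF finSh01(1) finite_imageI[OF finSh01(2)] disj] card_image[OF inj] by simp
  also have "\<dots> \<le> card Sh" by (rule card_mono[OF finSh]) (use sub0 sub1 in auto)
  finally show ?case using cF cF01 IH0 IH1 unfolding Sh_def by simp
qed

lemma sum_choose_le: "(\<Sum>j\<le>V. m choose j) \<le> (m + 1) ^ V"
proof -
  have "(\<Sum>j\<le>V. m choose j) \<le> (\<Sum>j\<le>V. (V choose j) * m ^ j * 1 ^ (V - j))"
  proof (rule sum_mono)
    fix j assume j: "j \<in> {..V}"
    have "m choose j \<le> m ^ j"
      by (cases "j \<le> m") (auto simp: binomial_le_pow binomial_eq_0)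
    also have "\<dots> \<le> (V choose j) * m ^ j" using j by (simp add: Suc_leI zero_less_binomial)
    finally show "m choose j \<le> (V choose j) * m ^ j * 1 ^ (V - j)" by simp
  qed
  also have "\<dots> = (m + 1) ^ V" using binomial[of m 1 V] by simp
  finally show ?thesis .
qed

lemma sauer:
  assumes X: "finite X" and FX: "\<forall>S\<in>F. S \<subseteq> X"
    and V: "\<And>C. C \<subseteq> X \<Longrightarrow> shat F C \<Longrightarrow> card C \<le> V"
  shows "card F \<le> (card X + 1) ^ V"
proof -
  have "card F \<le> card {C. C \<subseteq> X \<and> shat F C}" by (rule pajor[OF X FX])
  also have "\<dots> \<le> card (\<Union>j\<in>{..V}. {C. C \<subseteq> X \<and> card C = j})"
    by (rule card_mono) (use X V in \<open>auto intro: finite_subset[of _ "Pow X"]\<close>)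
  also have "\<dots> = (\<Sum>j\<le>V. card {C. C \<subseteq> X \<and> card C = j})"
    by (rule card_UN_disjoint) (use X in \<open>auto intro: finite_subset[of _ "Pow X"]\<close>)
  also have "\<dots> = (\<Sum>j\<le>V. card X choose j)" using n_subsets[OF X] by simp
  also have "\<dots> \<le> (card X + 1) ^ V" by (rule sum_choose_le)
  finally show ?thesis .
qed



lemma rej_prob_EE:
  assumes p: "\<forall>i\<in>{1..N}. 0 < p i \<and> p i < 1"
  shows "rej_prob p N n A = EE (\<lambda>i. p i / (1 - p i)) {1..N} n (\<lambda>s. ind (A s))"
proof -
  define U where "U = {1..N}"
  define q where "q i = p i / (1 - p i)" for i
  define P where "P = (\<Prod>i\<in>U. 1 - p i)"
  have Ppos: "P > 0" unfolding P_def U_def using p by (intro prod_pos) auto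
  have rw: "rej_weight p N s = P * (\<Prod>i\<in>s. q i)" if s: "s \<subseteq> U" for s
  proof -
    have "P = (\<Prod>i\<in>U - s. 1 - p i) * (\<Prod>i\<in>s. 1 - p i)"
      unfolding P_def using prod.subset_diff[OF s] U_def by simp
    moreover have "(\<Prod>i\<in>s. 1 - p i) * (\<Prod>i\<in>s. q i) = (\<Prod>i\<in>s. p i)"
    proof -
      have "(\<Prod>i\<in>s. 1 - p i) * (\<Prod>i\<in>s. q i) = (\<Prod>i\<in>s. (1 - p i) * q i)" by (rule prod.distrib[symmetric])
      also have "\<dots> = (\<Prod>i\<in>s. p i)"
      proof (rule prod.cong[OF refl])
        fix i assume "i \<in> s"
        then have "p i < 1" using s p U_def by auto
        then show "(1 - p i) * q i = p i" unfolding q_def by simp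
      qed
      finally show ?thesis .
    qed
    ultimately show ?thesis unfolding rej_weight_def U_def by (simp add: mult_ac)
  qed
  have sm: "samples N n = smp U n" unfolding samples_def smp_def U_def ..
  have fin: "finite (smp U n)" unfolding U_def by (rule finite_smp) simp
  have num: "(\<Sum>s\<in>{s\<in>samples N n. A s}. rej_weight p N s) = P * SW q U n (\<lambda>s. ind (A s))"
  proof -
    have "(\<Sum>s\<in>{s\<in>samples N n. A s}. rej_weight p N s) = (\<Sum>s\<in>smp U n. if A s then rej_weight p N s else 0)"
      unfolding sm using fin by (rule sum.inter_filter)
    also have "\<dots> = (\<Sum>s\<in>smp U n. P * ((\<Prod>i\<in>s. q i) * ind (A s)))"
      by (rule sum.cong[OF refl]) (auto simp: rw smp_def)
    finally show ?thesis unfolding SW_def by (simp add: sum_distrib_left)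
  qed
  have den: "(\<Sum>s\<in>samples N n. rej_weight p N s) = P * SW q U n (\<lambda>_. 1)"
  proof -
    have "(\<Sum>s\<in>samples N n. rej_weight p N s) = (\<Sum>s\<in>smp U n. P * ((\<Prod>i\<in>s. q i) * 1))"
      unfolding sm by (rule sum.cong[OF refl]) (auto simp: rw smp_def)
    then show ?thesis unfolding SW_def by (simp add: sum_distrib_left)
  qed
  show ?thesis unfolding rej_prob_def num den EE_def q_def[symmetric] U_def[symmetric]
    using Ppos by simp
qed

theorem proposition1:
  fixes N n V :: nat and p :: "nat \<Rightarrow> real" and G :: "('a \<Rightarrow> int) set"
    and x :: "nat \<Rightarrow> 'a" and y :: "nat \<Rightarrow> int" and \<delta> :: real
  assumes "1 \<le> n" "n \<le> N"
    and "\<forall>i\<in>{1..N}. 0 < p i \<and> p i < 1"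
    and "(\<Sum>i=1..N. p i) = real n"
    and "\<forall>i\<in>{1..N}. 0 < incl_prob p N n i"
    and "\<forall>g\<in>G. \<forall>z. g z \<in> {-1, 1}"
    and "has_VC_dim G V"
    and "\<forall>i\<in>{1..N}. y i \<in> {-1, 1}"
    and "0 < \<delta>" "\<delta> < 1"
  shows "let \<kappa> = (real n / real N) / (MIN i\<in>{1..N}. incl_prob p N n i);
             t = ln (2 / \<delta>) + real V * ln (real N + 1)
         in rej_prob p N n (\<lambda>s. \<forall>g\<in>G.
              \<bar>HT_risk p N n x y s g - emp_risk N x y g\<bar>
                \<le> 2 * \<kappa> * t / (3 * real n) + sqrt (2 * \<kappa> * t / real n))
            \<ge> 1 - \<delta>"
proof -
  note n1 = assms(1) and nN = assms(2) and p = assms(3) and ppos = assms(5) and Gval = assms(6)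
    and VC = assms(7) and yval = assms(8) and d0 = assms(9) and d1 = assms(10)
  define U where "U = {1..N}"
  define q where "q i = p i / (1 - p i)" for i
  have finU: "finite U" unfolding U_def by simp
  have cardU: "card U = N" unfolding U_def by simp
  have N0: "N > 0" using n1 nN by simp
  interpret D: design q U n
    by unfold_locales (use p nN in \<open>auto simp: U_def q_def\<close>)
  have rp: "rej_prob p N n A = EE q U n (\<lambda>s. ind (A s))" for A
    unfolding U_def q_def by (rule rej_prob_EE[OF p])
  have ip: "incl_prob p N n i = D.pi i" for i
    unfolding incl_prob_def rp D.pi_def ..
  define pm where "pm = (MIN i\<in>{1..N}. incl_prob p N n i)"
  have Une: "U \<noteq> {}" unfolding U_def using N0 by auto
  have pm_le: "i \<in> U \<Longrightarrow> pm \<le> D.pi i" for i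
  proof -
    assume i: "i \<in> U"
    have "pm \<le> incl_prob p N n i" unfolding pm_def using i U_def by (intro Min_le) auto
    then show ?thesis by (simp add: ip)
  qed
  have pm0: "pm > 0"
  proof -
    have "pm \<in> (\<lambda>i. incl_prob p N n i) ` {1..N}" unfolding pm_def
      by (rule Min_in) (use Une U_def in auto)
    then show ?thesis using ppos by auto
  qed
  have piU: "i \<in> U \<Longrightarrow> D.pi i > 0" for i using pm_le pm0 by (meson less_le_trans)
  define \<beta> where "\<beta> = 1 / (real N * pm)"
  have b0: "\<beta> > 0" unfolding \<beta>_def using pm0 N0 by simp
  define \<kappa> where "\<kappa> = (real n / real N) / pm"
  define L where "L = ln (2 / \<delta>) + real V * ln (real N + 1)"
  have L0: "L > 0"
  proof -
    have "ln (2 / \<delta>) > 0" using d0 d1 by (simp add: field_simps)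
    moreover have "real V * ln (real N + 1) \<ge> 0" by simp
    ultimately show ?thesis unfolding L_def by linarith
  qed
  define T where "T = 2 * \<beta> * L / 3 + sqrt (2 * \<beta> * L)"
  have Teq: "2 * \<kappa> * L / (3 * real n) + sqrt (2 * \<kappa> * L / real n) = T"
  proof -
    have "\<kappa> / real n = \<beta>" unfolding \<kappa>_def \<beta>_def using n1 by simp
    then have h: "\<kappa> = \<beta> * real n" using n1 by (simp add: field_simps)
    have a: "2 * \<kappa> * L / (3 * real n) = 2 * \<beta> * L / 3" and b: "2 * \<kappa> * L / real n = 2 * \<beta> * L"
      unfolding h using n1 by (simp_all add: field_simps)
    show ?thesis unfolding a b T_def ..
  qed
  define A where "A g = {i\<in>U. g (x i) \<noteq> y i}" for g :: "'a \<Rightarrow> int"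
  define Pat where "Pat = A ` G"
  define c where "c B i = ind (i \<in> B) / (real N * D.pi i)" for B i
  define bad where "bad B s = (\<bar>\<Sum>i\<in>U. c B i * (ind (i \<in> s) - D.pi i)\<bar> > T)" for B s
  have Zeq: "HT_risk p N n x y s g - emp_risk N x y g = (\<Sum>i\<in>U. c (A g) i * (ind (i \<in> s) - D.pi i))" for s g
  proof -
    have "(\<Sum>i\<in>U. c (A g) i * (ind (i \<in> s) - D.pi i))
       = (\<Sum>i\<in>U. (1 / real N) * (ind (i \<in> s) / D.pi i * ind (g (x i) \<noteq> y i)) - (1 / real N) * ind (g (x i) \<noteq> y i))"
    proof (rule sum.cong[OF refl])
      fix i assume i: "i \<in> U"
      have "D.pi i \<noteq> 0" using piU[OF i] by simp
      then show "c (A g) i * (ind (i \<in> s) - D.pi i) = (1 / real N) * (ind (i \<in> s) / D.pi i * ind (g (x i) \<noteq> y i)) - (1 / real N) * ind (g (x i) \<noteq> y i)"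
        unfolding c_def A_def using i N0 by (auto simp: field_simps)
    qed
    also have "\<dots> = HT_risk p N n x y s g - emp_risk N x y g"
      unfolding HT_risk_def emp_risk_def ip U_def by (simp add: sum_subtractf sum_distrib_left)
    finally show ?thesis by simp
  qed
  have cb: "i \<in> U \<Longrightarrow> 0 \<le> c B i \<and> c B i \<le> \<beta>" for B i
  proof -
    assume i: "i \<in> U"
    have "c B i \<le> 1 / (real N * D.pi i)" unfolding c_def using piU[OF i] N0 by (simp add: divide_right_mono)
    also have "\<dots> \<le> \<beta>" unfolding \<beta>_def using pm_le[OF i] pm0 N0
      by (intro divide_left_mono mult_left_mono) auto
    finally show ?thesis unfolding c_def using piU[OF i] by simp
  qed
  have cv: "(\<Sum>i\<in>U. D.pi i * (c B i)^2) \<le> \<beta>" for B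
  proof -
    have "(\<Sum>i\<in>U. D.pi i * (c B i)^2) \<le> (\<Sum>i\<in>U. 1 / (real N * real N * pm))"
    proof (rule sum_mono)
      fix i assume i: "i \<in> U"
      have pi0: "D.pi i > 0" using piU[OF i] .
      have "D.pi i * (c B i)^2 = ind (i \<in> B) / (real N * real N * D.pi i)"
        unfolding c_def using pi0 by (simp add: power2_eq_square field_simps)
      also have "\<dots> \<le> 1 / (real N * real N * D.pi i)" using pi0 by (simp add: divide_right_mono)
      also have "\<dots> \<le> 1 / (real N * real N * pm)" using pm_le[OF i] pm0 N0
        by (intro divide_left_mono mult_left_mono) auto
      finally show "D.pi i * (c B i)^2 \<le> 1 / (real N * real N * pm)" .
    qed
    also have "\<dots> = \<beta>" unfolding \<beta>_def using N0 by (simp add: cardU)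
    finally show ?thesis .
  qed
  have tail: "EE q U n (\<lambda>s. ind (bad B s)) \<le> 2 * exp (- L)" for B
    unfolding bad_def T_def by (rule D.two_tail[OF cb cv b0 L0])
  define X0 where "X0 = x ` U"
  define F where "F = (\<lambda>g. {z\<in>X0. g z = 1}) ` G"
  define h where "h S = {i\<in>U. (x i \<in> S) \<noteq> (y i = 1)}" for S
  have PatF: "Pat = h ` F"
    unfolding Pat_def F_def image_image
  proof (rule image_cong[OF refl])
    fix g assume g: "g \<in> G"
    show "A g = h {z \<in> X0. g z = 1}"
      unfolding A_def h_def X0_def
    proof (rule Collect_cong)
      fix i
      show "(i \<in> U \<and> g (x i) \<noteq> y i) = (i \<in> U \<and> (x i \<in> {z \<in> x ` U. g z = 1}) \<noteq> (y i = 1))"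
        using Gval g yval unfolding U_def by fastforce
    qed
  qed
  have finX0: "finite X0" unfolding X0_def using finU by simp
  have finF: "finite F" unfolding F_def by (rule finite_subset[of _ "Pow X0"]) (use finX0 in auto)
  have cF: "card F \<le> (card X0 + 1) ^ V"
  proof (rule sauer[OF finX0])
    show "\<forall>S\<in>F. S \<subseteq> X0" unfolding F_def by auto
    fix C assume C: "C \<subseteq> X0" "shat F C"
    have "shatters G C" unfolding shatters_def
    proof (intro allI impI)
      fix B assume "B \<subseteq> C"
      then obtain S where S: "S \<in> F" "S \<inter> C = B" using C(2) unfolding shat_def by blast
      then obtain g where g: "g \<in> G" "S = {z\<in>X0. g z = 1}" unfolding F_def by auto
      have "{c\<in>C. g c = 1} = B" using S(2) g(2) C(1) by auto
      then show "\<exists>g\<in>G. {c\<in>C. g c = 1} = B" using g(1) by blast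
    qed
    moreover have "finite C" using C(1) finX0 by (rule finite_subset)
    ultimately show "card C \<le> V" using VC unfolding has_VC_dim_def by blast
  qed
  have cX0: "card X0 \<le> N" unfolding X0_def using card_image_le[OF finU, of x] cardU by simp
  have cPat: "real (card Pat) \<le> (real N + 1) ^ V"
  proof -
    have "card Pat \<le> card F" unfolding PatF by (rule card_image_le[OF finF])
    also have "\<dots> \<le> (card X0 + 1) ^ V" by (rule cF)
    also have "\<dots> \<le> (N + 1) ^ V" using cX0 by (intro power_mono) auto
    finally have "card Pat \<le> (N + 1) ^ V" .
    then have "real (card Pat) \<le> real ((N + 1) ^ V)" by (simp only: of_nat_le_iff)
    then show ?thesis by (simp add: add.commute)
  qed
  have finPat: "finite Pat" unfolding PatF using finF by simp
  have pw: "ind (\<forall>g\<in>G. \<bar>HT_risk p N n x y s g - emp_risk N x y g\<bar> \<le> T) \<ge> 1 - (\<Sum>B\<in>Pat. ind (bad B s))" for s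
  proof (cases "\<forall>g\<in>G. \<bar>HT_risk p N n x y s g - emp_risk N x y g\<bar> \<le> T")
    case True
    have "(\<Sum>B\<in>Pat. ind (bad B s)) \<ge> 0" by (intro sum_nonneg) auto
    then show ?thesis using True by simp
  next
    case False
    then obtain g where g: "g \<in> G" "\<bar>HT_risk p N n x y s g - emp_risk N x y g\<bar> > T" by force
    have "bad (A g) s" unfolding bad_def using g(2) Zeq by simp
    moreover have "A g \<in> Pat" unfolding Pat_def using g(1) by simp
    ultimately have "1 \<le> (\<Sum>B\<in>Pat. ind (bad B s))"
      using member_le_sum[OF \<open>A g \<in> Pat\<close>, of "\<lambda>B. ind (bad B s)"] finPat by auto
    then show ?thesis using False by simp
  qed
  have "rej_prob p N n (\<lambda>s. \<forall>g\<in>G. \<bar>HT_risk p N n x y s g - emp_risk N x y g\<bar> \<le> T)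
      = EE q U n (\<lambda>s. ind (\<forall>g\<in>G. \<bar>HT_risk p N n x y s g - emp_risk N x y g\<bar> \<le> T))" by (rule rp)
  also have "\<dots> \<ge> EE q U n (\<lambda>s. 1 + (-1) * (\<Sum>B\<in>Pat. ind (bad B s)))"
    by (rule EE_mono) (use pw D.wnn in auto)
  moreover have "EE q U n (\<lambda>s. 1 + (-1) * (\<Sum>B\<in>Pat. ind (bad B s))) = 1 - (\<Sum>B\<in>Pat. EE q U n (\<lambda>s. ind (bad B s)))"
    unfolding EE_add EE_cmult EE_sum using EE_const1[OF D.fin D.k D.wpos] by simp
  moreover have "(\<Sum>B\<in>Pat. EE q U n (\<lambda>s. ind (bad B s))) \<le> \<delta>"
  proof -
    have "(\<Sum>B\<in>Pat. EE q U n (\<lambda>s. ind (bad B s))) \<le> (\<Sum>B\<in>Pat. 2 * exp (- L))"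
      by (rule sum_mono) (rule tail)
    also have "\<dots> = real (card Pat) * (2 * exp (- L))" by simp
    also have "2 * exp (- L) = \<delta> / (real N + 1) ^ V"
    proof -
      have "exp (- L) = exp (- ln (2 / \<delta>)) * exp (- (real V * ln (real N + 1)))"
        unfolding L_def by (simp add: exp_add[symmetric])
      also have "exp (- ln (2 / \<delta>)) = \<delta> / 2" using d0 by (simp add: exp_minus)
      also have "exp (- (real V * ln (real N + 1))) = 1 / (real N + 1) ^ V"
        by (simp add: exp_minus exp_of_nat_mult inverse_eq_divide)
      finally show ?thesis by simp
    qed
    also have "real (card Pat) * (\<delta> / (real N + 1) ^ V) \<le> (real N + 1) ^ V * (\<delta> / (real N + 1) ^ V)"
      by (rule mult_right_mono[OF cPat]) (use d0 in simp)
    also have "\<dots> = \<delta>" by simp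
    finally show ?thesis .
  qed
  ultimately have "rej_prob p N n (\<lambda>s. \<forall>g\<in>G. \<bar>HT_risk p N n x y s g - emp_risk N x y g\<bar> \<le> T) \<ge> 1 - \<delta>"
    by linarith
  then show ?thesis unfolding Let_def pm_def[symmetric] \<kappa>_def[symmetric] L_def[symmetric] Teq .
qed

end
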